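(* Let $G=(V,E)$ be a forest and let $x\in\mathrm{SOL}(G)$. Then there exists a maximal independent set $S$ of $G$ with $S\subseteq\sigma(x)$.
   Context: A forest is a finite simple graph without cycles. With $A$ the adjacency matrix of $G$, $I$ the identity and $\mathbf{e}$ the all-ones vector, $\mathrm{SOL}(G)$ is the set of $x$ with $x\geq 0$, $(A+I)x\geq\mathbf{e}$ and $x^\top((A+I)x-\mathbf{e})=0$. $\sigma(x):=\{i\in V\mid x_i>0\}$. *)

theory Defs
  imports Complex_Main
begin

definition simple_graph :: "'a set \<Rightarrow> ('a \<Rightarrow> 'a \<Rightarrow> bool) \<Rightarrow> bool" where
  "simple_graph V E \<longleftrightarrow> finite V \<and> (\<forall>u v. E u v \<longrightarrow> u \<in> V \<and> v \<in> V)
     \<and> (\<forall>u v. E u v \<longrightarrow> E v u) \<and> (\<forall>v. \<not> E v v)"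

definition is_cycle :: "'a set \<Rightarrow> ('a \<Rightarrow> 'a \<Rightarrow> bool) \<Rightarrow> 'a list \<Rightarrow> bool" where
  "is_cycle V E cs \<longleftrightarrow> length cs \<ge> 3 \<and> distinct cs \<and> set cs \<subseteq> V
     \<and> (\<forall>i. Suc i < length cs \<longrightarrow> E (cs ! i) (cs ! Suc i))
     \<and> E (last cs) (hd cs)"

definition forest :: "'a set \<Rightarrow> ('a \<Rightarrow> 'a \<Rightarrow> bool) \<Rightarrow> bool" where
  "forest V E \<longleftrightarrow> simple_graph V E \<and> (\<nexists>cs. is_cycle V E cs)"

definition AIx :: "'a set \<Rightarrow> ('a \<Rightarrow> 'a \<Rightarrow> bool) \<Rightarrow> ('a \<Rightarrow> real) \<Rightarrow> 'a \<Rightarrow> real" where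
  "AIx V E x i = x i + (\<Sum>j\<in>{j\<in>V. E i j}. x j)"

text \<open>SOL(G): x \<ge> 0, (A+I)x \<ge> e, x^T((A+I)x - e) = 0; vectors are functions on V
  Only the values of x on V matter.\<close>
definition SOL :: "'a set \<Rightarrow> ('a \<Rightarrow> 'a \<Rightarrow> bool) \<Rightarrow> ('a \<Rightarrow> real) set" where
  "SOL V E = {x. (\<forall>i\<in>V. x i \<ge> 0) \<and> (\<forall>i\<in>V. AIx V E x i \<ge> 1)
      \<and> (\<Sum>i\<in>V. x i * (AIx V E x i - 1)) = 0}"

definition supp_vec :: "'a set \<Rightarrow> ('a \<Rightarrow> real) \<Rightarrow> 'a set" where
  "supp_vec V x = {i\<in>V. x i > 0}"

definition independent_set :: "'a set \<Rightarrow> ('a \<Rightarrow> 'a \<Rightarrow> bool) \<Rightarrow> 'a set \<Rightarrow> bool" where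
  "independent_set V E S \<longleftrightarrow> S \<subseteq> V \<and> (\<forall>u\<in>S. \<forall>v\<in>S. \<not> E u v)"

definition maximal_independent_set :: "'a set \<Rightarrow> ('a \<Rightarrow> 'a \<Rightarrow> bool) \<Rightarrow> 'a set \<Rightarrow> bool" where
  "maximal_independent_set V E S \<longleftrightarrow> independent_set V E S
     \<and> (\<forall>T. independent_set V E T \<and> S \<subseteq> T \<longrightarrow> T = S)"

end

theory Submission
  imports Defs
begin

lemma forest_leaf:
  assumes F: "forest V E" and WV: "W \<subseteq> V" and Wne: "W \<noteq> {}"
  shows "\<exists>l\<in>W. \<forall>a b. a\<in>W \<longrightarrow> b\<in>W \<longrightarrow> E l a \<longrightarrow> E l b \<longrightarrow> a = b"
proof (rule ccontr)
  assume "\<not> ?thesis"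
  hence two: "\<forall>l\<in>W. \<exists>a b. a\<in>W \<and> b\<in>W \<and> E l a \<and> E l b \<and> a \<noteq> b" by blast
  have sg: "simple_graph V E" and nocyc: "\<nexists>cs. is_cycle V E cs" using F by (auto simp: forest_def)
  have finW: "finite W" using sg WV by (auto simp: simple_graph_def intro: finite_subset)
  have irr: "\<And>v. \<not> E v v" using sg by (auto simp: simple_graph_def)
  define P where "P xs \<longleftrightarrow> xs \<noteq> [] \<and> distinct xs \<and> set xs \<subseteq> W \<and> (\<forall>i. Suc i < length xs \<longrightarrow> E (xs!i) (xs!Suc i))" for xs
  obtain w where w: "w \<in> W" using Wne by blast
  have P1: "P [w]" using w by (simp add: P_def)
  have bnd: "\<forall>xs. P xs \<longrightarrow> length xs < card W + 1"
  proof (intro allI impI)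
    fix xs assume "P xs"
    hence "distinct xs" "set xs \<subseteq> W" by (auto simp: P_def)
    hence "length xs \<le> card W" using finW by (metis card_mono distinct_card)
    thus "length xs < card W + 1" by simp
  qed
  obtain xs where Pxs: "P xs" and mx: "\<forall>ys. P ys \<longrightarrow> length ys \<le> length xs"
    using ex_has_greatest_nat[of P "[w]" length "card W + 1", OF P1 bnd] by blast
  have ne: "xs \<noteq> []" and dis: "distinct xs" and sub: "set xs \<subseteq> W"
    and adj: "\<forall>i. Suc i < length xs \<longrightarrow> E (xs!i) (xs!Suc i)" using Pxs by (auto simp: P_def)
  define n where "n = length xs"
  have n1: "n \<ge> 1" using ne by (cases xs) (auto simp: n_def)
  define v where "v = last xs"
  have vn: "v = xs ! (n - 1)" using ne by (simp add: v_def n_def last_conv_nth)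
  have vW: "v \<in> W" using ne sub by (auto simp: v_def)
  obtain a b where ab: "a\<in>W" "b\<in>W" "E v a" "E v b" "a \<noteq> b" using two vW by blast
  obtain u where u: "u \<in> W" "E v u" "n \<ge> 2 \<longrightarrow> u \<noteq> xs ! (n - 2)"
    using ab by (cases "n \<ge> 2 \<and> a = xs ! (n - 2)") auto
  show False
  proof (cases "u \<in> set xs")
    case False
    have "P (xs @ [u])" unfolding P_def
    proof (intro conjI allI impI)
      show "distinct (xs @ [u])" using dis False by simp
      show "set (xs @ [u]) \<subseteq> W" using sub u by simp
      fix i assume i: "Suc i < length (xs @ [u])"
      show "E ((xs @ [u]) ! i) ((xs @ [u]) ! Suc i)"
      proof (cases "Suc i < length xs")
        case True thus ?thesis using adj by (simp add: nth_append)
      next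
        case False
        hence "i = n - 1" using i by (simp add: n_def)
        thus ?thesis using u vn n1 by (simp add: nth_append n_def)
      qed
    qed simp
    thus False using mx by fastforce
  next
    case True
    then obtain k where k: "k < n" "xs ! k = u" by (auto simp: in_set_conv_nth n_def)
    have "k \<noteq> n - 1" using k u irr vn by metis
    moreover have "k \<noteq> n - 2" using k u \<open>k \<noteq> n - 1\<close> n1 by (cases "n \<ge> 2") auto
    ultimately have k3: "k + 3 \<le> n" using k by linarith
    have "is_cycle V E (drop k xs)" unfolding is_cycle_def
    proof (intro conjI allI impI)
      show "3 \<le> length (drop k xs)" using k3 by (simp add: n_def)
      show "distinct (drop k xs)" using dis by simp
      show "set (drop k xs) \<subseteq> V" using sub WV set_drop_subset by fast
      fix i assume "Suc i < length (drop k xs)"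
      thus "E (drop k xs ! i) (drop k xs ! Suc i)" using adj by simp
    next
      have "last (drop k xs) = v" using k by (simp add: last_drop v_def n_def)
      moreover have "hd (drop k xs) = u" using k by (simp add: hd_drop_conv_nth n_def)
      ultimately show "E (last (drop k xs)) (hd (drop k xs))" using u by simp
    qed
    thus False using nocyc by blast
  qed
qed

lemma ind_ins:
  assumes "\<forall>u\<in>S. \<forall>w\<in>S. \<not> E u w" "\<not> E p p" "\<forall>w\<in>S. \<not> E p w" "\<forall>u w. E u w \<longrightarrow> E w u"
  shows "\<forall>u\<in>insert p S. \<forall>w\<in>insert p S. \<not> E u w"
  using assms by auto

lemma dom_ins:
  assumes "\<forall>v\<in>W'. v\<in>S \<or> (\<exists>u\<in>S. E v u)" "W' = W - ({p} \<union> {n. E p n})" "\<forall>u w. E u w \<longrightarrow> E w u"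
  shows "\<forall>v\<in>W. v\<in>insert p S \<or> (\<exists>u\<in>insert p S. E v u)"
proof
  fix v assume v: "v \<in> W"
  show "v\<in>insert p S \<or> (\<exists>u\<in>insert p S. E v u)"
  proof (cases "v = p \<or> E p v")
    case True thus ?thesis using assms(3) by auto
  next
    case False
    hence "v \<in> W'" using v assms(2) by auto
    thus ?thesis using assms(1) by auto
  qed
qed

lemma indep_dom:
  assumes F: "forest V E"
  shows "finite W \<Longrightarrow> W \<subseteq> V \<Longrightarrow> T \<subseteq> W
    \<Longrightarrow> (\<forall>i\<in>T. \<forall>j k. j\<in>T \<longrightarrow> k\<in>T \<longrightarrow> E i j \<longrightarrow> E i k \<longrightarrow> j = k)
    \<Longrightarrow> (\<forall>v\<in>W-T. (\<exists>u\<in>T. E v u \<and> (\<forall>w\<in>T. \<not> E u w)) \<or> (\<exists>a b. a\<in>T \<and> b\<in>T \<and> a\<noteq>b \<and> E v a \<and> E v b))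
    \<Longrightarrow> \<exists>S\<subseteq>T. (\<forall>u\<in>S. \<forall>w\<in>S. \<not> E u w) \<and> (\<forall>v\<in>W. v\<in>S \<or> (\<exists>u\<in>S. E v u))"
proof (induction "card W" arbitrary: W T rule: less_induct)
  case less
  have sg: "simple_graph V E" using F by (simp add: forest_def)
  have symA: "\<forall>u v. E u v \<longrightarrow> E v u" using sg by (auto simp: simple_graph_def)
  have sym: "\<And>u v. E u v \<Longrightarrow> E v u" and irr: "\<And>v. \<not> E v v" using sg by (auto simp: simple_graph_def)
  note fin = less.prems(1) and WV = less.prems(2) and TW = less.prems(3)
    and A = less.prems(4) and B = less.prems(5)
  have IH: "\<exists>S\<subseteq>T'. (\<forall>u\<in>S. \<forall>w\<in>S. \<not> E u w) \<and> (\<forall>v\<in>W'. v\<in>S \<or> (\<exists>u\<in>S. E v u))"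
    if "W' \<subseteq> W" "card W' < card W" "T' \<subseteq> W'"
      "\<forall>i\<in>T'. \<forall>j k. j\<in>T' \<longrightarrow> k\<in>T' \<longrightarrow> E i j \<longrightarrow> E i k \<longrightarrow> j = k"
      "\<forall>v\<in>W'-T'. (\<exists>u\<in>T'. E v u \<and> (\<forall>w\<in>T'. \<not> E u w)) \<or> (\<exists>a b. a\<in>T' \<and> b\<in>T' \<and> a\<noteq>b \<and> E v a \<and> E v b)"
    for W' T'
  proof (rule less.hyps[OF that(2)])
    show "finite W'" using fin that(1) by (rule finite_subset[rotated])
    show "W' \<subseteq> V" using WV that(1) by (rule order_trans[rotated])
  qed (fact that)+
  show ?case
  proof (cases "W = {}")
    case True thus ?thesis using TW by auto
  next
    case False
    then obtain l where lW: "l \<in> W" and leaf: "\<forall>a b. a\<in>W \<longrightarrow> b\<in>W \<longrightarrow> E l a \<longrightarrow> E l b \<longrightarrow> a = b"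
      using forest_leaf[OF F WV] by blast
    show ?thesis
    proof (cases "l \<in> T")
      case False
      then obtain u where u: "u\<in>T" "E l u" "\<forall>w\<in>T. \<not> E u w"
        using B lW leaf TW by blast
      define W' where "W' = W - {l}"
      have lt: "card W' < card W" using fin lW unfolding W'_def by (rule card_Diff1_less)
      have "\<exists>S\<subseteq>T. (\<forall>u\<in>S. \<forall>w\<in>S. \<not> E u w) \<and> (\<forall>v\<in>W'. v\<in>S \<or> (\<exists>u\<in>S. E v u))"
      proof (rule less.hyps[OF lt])
        show "finite W'" using fin by (simp add: W'_def)
        show "W' \<subseteq> V" using WV by (auto simp: W'_def)
        show "T \<subseteq> W'" using TW False by (auto simp: W'_def)
        show "\<forall>i\<in>T. \<forall>j k. j\<in>T \<longrightarrow> k\<in>T \<longrightarrow> E i j \<longrightarrow> E i k \<longrightarrow> j = k" using A .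
        show "\<forall>v\<in>W'-T. (\<exists>u\<in>T. E v u \<and> (\<forall>w\<in>T. \<not> E u w)) \<or> (\<exists>a b. a\<in>T \<and> b\<in>T \<and> a\<noteq>b \<and> E v a \<and> E v b)"
          using B by (auto simp: W'_def)
      qed
      then obtain S where S: "S \<subseteq> T" "\<forall>u\<in>S. \<forall>w\<in>S. \<not> E u w" "\<forall>v\<in>W'. v\<in>S \<or> (\<exists>u\<in>S. E v u)"
        by blast
      have "u \<in> S" using S u TW False unfolding W'_def by blast
      thus ?thesis using S u unfolding W'_def by blast
    next
      case lT: True
      show ?thesis
      proof (cases "\<forall>w\<in>T. \<not> E l w")
        case iso: True
        define W' where "W' = W - ({l} \<union> {n. E l n})"
        define T' where "T' = T - {l}"
        have lt: "card W' < card W" using fin lW unfolding W'_def by (intro psubset_card_mono) auto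
        have TW': "T' \<subseteq> W'" using TW iso unfolding T'_def W'_def by auto
        have B': "\<forall>v\<in>W'-T'. (\<exists>u\<in>T'. E v u \<and> (\<forall>w\<in>T'. \<not> E u w)) \<or> (\<exists>a b. a\<in>T' \<and> b\<in>T' \<and> a\<noteq>b \<and> E v a \<and> E v b)"
        proof
          fix v assume v: "v \<in> W' - T'"
          hence v1: "v \<in> W - T" "\<not> E v l" using sym unfolding W'_def T'_def by auto
          from B v1(1) consider
            (c1) u where "u\<in>T" "E v u" "\<forall>w\<in>T. \<not> E u w"
          | (c2) a b where "a\<in>T" "b\<in>T" "a\<noteq>b" "E v a" "E v b" by blast
          thus "(\<exists>u\<in>T'. E v u \<and> (\<forall>w\<in>T'. \<not> E u w)) \<or> (\<exists>a b. a\<in>T' \<and> b\<in>T' \<and> a\<noteq>b \<and> E v a \<and> E v b)"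
          proof cases
            case c1
            hence "u \<in> T'" using v1(2) unfolding T'_def by auto
            thus ?thesis using c1 unfolding T'_def by blast
          next
            case c2
            hence "a \<in> T'" "b \<in> T'" using v1(2) unfolding T'_def by auto
            thus ?thesis using c2 by blast
          qed
        qed
        have A': "\<forall>i\<in>T'. \<forall>j k. j\<in>T' \<longrightarrow> k\<in>T' \<longrightarrow> E i j \<longrightarrow> E i k \<longrightarrow> j = k"
          using A unfolding T'_def by blast
        obtain S where S: "S \<subseteq> T'" "\<forall>u\<in>S. \<forall>w\<in>S. \<not> E u w" "\<forall>v\<in>W'. v\<in>S \<or> (\<exists>u\<in>S. E v u)"
          using IH[OF _ lt TW' A' B'] unfolding W'_def by blast
        have "insert l S \<subseteq> T" using S lT unfolding T'_def by auto
        moreover have "\<forall>u\<in>insert l S. \<forall>w\<in>insert l S. \<not> E u w"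
          using ind_ins[OF S(2) irr _ symA] S(1) iso unfolding T'_def by blast
        moreover have "\<forall>v\<in>W. v\<in>insert l S \<or> (\<exists>u\<in>insert l S. E v u)"
          using dom_ins[OF S(3) W'_def symA] .
        ultimately show ?thesis by blast
      next
        case False
        then obtain p where p: "p \<in> T" "E l p" by blast
        define W' where "W' = W - ({p} \<union> {n. E p n})"
        define T' where "T' = T \<inter> W'"
        have pW: "p \<in> W" using p TW by auto
        have lt: "card W' < card W" using fin pW unfolding W'_def by (intro psubset_card_mono) auto
        have TW': "T' \<subseteq> W'" unfolding T'_def by auto
        have B': "\<forall>v\<in>W'-T'. (\<exists>u\<in>T'. E v u \<and> (\<forall>w\<in>T'. \<not> E u w)) \<or> (\<exists>a b. a\<in>T' \<and> b\<in>T' \<and> a\<noteq>b \<and> E v a \<and> E v b)"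
        proof
          fix v assume v: "v \<in> W' - T'"
          hence v1: "v \<in> W - T" "\<not> E v p" "v \<noteq> p" using sym unfolding W'_def T'_def by auto
          from B v1(1) consider
            (c1) u where "u\<in>T" "E v u" "\<forall>w\<in>T. \<not> E u w"
          | (c2) a b where "a\<in>T" "b\<in>T" "a\<noteq>b" "E v a" "E v b" by blast
          thus "(\<exists>u\<in>T'. E v u \<and> (\<forall>w\<in>T'. \<not> E u w)) \<or> (\<exists>a b. a\<in>T' \<and> b\<in>T' \<and> a\<noteq>b \<and> E v a \<and> E v b)"
          proof cases
            case c1
            have "u \<noteq> p" using c1 v1 by auto
            moreover have "\<not> E p u" using c1 p sym by blast
            ultimately have "u \<in> T'" using c1 TW unfolding T'_def W'_def by auto
            thus ?thesis using c1 unfolding T'_def by blast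
          next
            case c2
            have nl: "\<not> E v l"
            proof
              assume "E v l"
              hence "E l v" by (rule sym)
              hence "v = p" using leaf v1 pW p by blast
              thus False using v1 by simp
            qed
            have "\<And>c. c \<in> T \<Longrightarrow> E v c \<Longrightarrow> c \<in> T'"
            proof -
              fix c assume c: "c \<in> T" "E v c"
              have "c \<noteq> p" using c v1 by auto
              moreover have "\<not> E p c"
              proof
                assume "E p c"
                hence "c = l" using A p lT sym c by blast
                thus False using c nl by simp
              qed
              ultimately show "c \<in> T'" using c TW unfolding T'_def W'_def by auto
            qed
            thus ?thesis using c2 by blast
          qed
        qed
        have A': "\<forall>i\<in>T'. \<forall>j k. j\<in>T' \<longrightarrow> k\<in>T' \<longrightarrow> E i j \<longrightarrow> E i k \<longrightarrow> j = k"
          using A unfolding T'_def by blast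
        obtain S where S: "S \<subseteq> T'" "\<forall>u\<in>S. \<forall>w\<in>S. \<not> E u w" "\<forall>v\<in>W'. v\<in>S \<or> (\<exists>u\<in>S. E v u)"
          using IH[OF _ lt TW' A' B'] unfolding W'_def by blast
        have "insert p S \<subseteq> T" using S p unfolding T'_def by auto
        moreover have "\<forall>u\<in>insert p S. \<forall>w\<in>insert p S. \<not> E u w"
          using ind_ins[OF S(2) irr _ symA] S(1) unfolding T'_def W'_def by blast
        moreover have "\<forall>v\<in>W. v\<in>insert p S \<or> (\<exists>u\<in>insert p S. E v u)"
          using dom_ins[OF S(3) W'_def symA] .
        ultimately show ?thesis by blast
      qed
    qed
  qed
qed

theorem lemma6:
  fixes V :: "'a set" and E :: "'a \<Rightarrow> 'a \<Rightarrow> bool" and x :: "'a \<Rightarrow> real"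
  assumes "forest V E"
    and "x \<in> SOL V E"
  shows "\<exists>S. maximal_independent_set V E S \<and> S \<subseteq> supp_vec V x"
proof -
  note F = assms(1)
  have sg: "simple_graph V E" using F by (simp add: forest_def)
  have finV: "finite V" and EV: "\<And>u v. E u v \<Longrightarrow> u \<in> V \<and> v \<in> V"
    using sg by (auto simp: simple_graph_def)
  have nn: "\<And>i. i\<in>V \<Longrightarrow> x i \<ge> 0" and ge1: "\<And>i. i\<in>V \<Longrightarrow> AIx V E x i \<ge> 1"
    and s0: "(\<Sum>i\<in>V. x i * (AIx V E x i - 1)) = 0" using assms(2) by (auto simp: SOL_def)
  have "\<forall>i\<in>V. x i * (AIx V E x i - 1) = 0"
  proof -
    have "\<And>i. i \<in> V \<Longrightarrow> 0 \<le> x i * (AIx V E x i - 1)" using nn ge1 by simp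
    from sum_nonneg_eq_0_iff[OF finV this] s0 show ?thesis by simp
  qed
  define T where "T = supp_vec V x"
  have TV: "T \<subseteq> V" by (auto simp: T_def supp_vec_def)
  have Tpos: "\<And>i. i \<in> T \<Longrightarrow> x i > 0" by (auto simp: T_def supp_vec_def)
  have nT: "\<And>i. i \<in> V \<Longrightarrow> i \<notin> T \<Longrightarrow> x i = 0" using nn by (force simp: T_def supp_vec_def)
  have eq1: "AIx V E x i = 1" if "i \<in> T" for i
    using \<open>\<forall>i\<in>V. x i * (AIx V E x i - 1) = 0\<close> that TV Tpos[OF that] by force
  define N where "N i = {j\<in>V. E i j}" for i
  have AI: "AIx V E x i = x i + sum x (N i)" for i by (simp add: AIx_def N_def)
  have finN: "finite (N i)" for i using finV by (simp add: N_def)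
  have sumT: "sum x (N i) = sum x (N i \<inter> T)" for i
    by (rule sum.mono_neutral_right) (auto simp: finV N_def nT)
  have ge_one: "sum x (N i) \<ge> x a" if "a \<in> N i" for i a
    using that finN nn by (intro member_le_sum) (auto simp: N_def)
  have ge_two: "sum x (N i) \<ge> x a + x b" if "a \<in> N i" "b \<in> N i" "a \<noteq> b" for i a b
  proof -
    have "sum x {a, b} \<le> sum x (N i)"
      using that finN nn by (intro sum_mono2) (auto simp: N_def)
    thus ?thesis using that by simp
  qed
  have A: "\<forall>i\<in>T. \<forall>j k. j\<in>T \<longrightarrow> k\<in>T \<longrightarrow> E i j \<longrightarrow> E i k \<longrightarrow> j = k"
  proof (rule ccontr)
    assume nA: "\<not> ?thesis"
    define D where "D = {i\<in>T. \<exists>j k. j\<in>T \<and> k\<in>T \<and> E i j \<and> E i k \<and> j \<noteq> k}"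
    have Dne: "D \<noteq> {}" using nA by (auto simp: D_def)
    have DV: "D \<subseteq> V" using TV by (auto simp: D_def)
    obtain l where lD: "l \<in> D" and leaf: "\<forall>a b. a\<in>D \<longrightarrow> b\<in>D \<longrightarrow> E l a \<longrightarrow> E l b \<longrightarrow> a = b"
      using forest_leaf[OF F DV Dne] by blast
    obtain j k where jk: "j\<in>T" "k\<in>T" "E l j" "E l k" "j \<noteq> k" using lD by (auto simp: D_def)
    obtain j' k' where jk': "j'\<in>T" "k'\<in>T" "E l j'" "E l k'" "j' \<noteq> k'" "j' \<notin> D"
    proof (cases "j \<in> D")
      case True
      hence "k \<notin> D" using leaf jk by blast
      thus ?thesis using that[of k j] jk by blast
    next
      case False thus ?thesis using that[of j k] jk by blast
    qed
    have sym: "E j' l" using sg jk'(3) by (auto simp: simple_graph_def)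
    have lT: "l \<in> T" using lD by (auto simp: D_def)
    have "N j' \<inter> T = {l}"
    proof
      show "{l} \<subseteq> N j' \<inter> T" using sym lT EV by (auto simp: N_def)
      show "N j' \<inter> T \<subseteq> {l}"
      proof
        fix w assume w: "w \<in> N j' \<inter> T"
        show "w \<in> {l}"
        proof (rule ccontr)
          assume "w \<notin> {l}"
          hence "j' \<in> D" using w sym lT jk'(1) by (auto simp: D_def N_def)
          thus False using jk'(6) by simp
        qed
      qed
    qed
    hence "sum x (N j') = x l" using sumT by simp
    hence "x j' + x l = 1" using eq1[OF jk'(1)] AI by simp
    moreover have "x l + (x j' + x k') \<le> 1"
      using eq1[OF lT] AI ge_two[of j' l k'] jk' EV by (auto simp: N_def)
    moreover have "x k' > 0" using Tpos jk' by simp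
    ultimately show False by simp
  qed
  have B: "\<forall>v\<in>V-T. (\<exists>u\<in>T. E v u \<and> (\<forall>w\<in>T. \<not> E u w)) \<or> (\<exists>a b. a\<in>T \<and> b\<in>T \<and> a\<noteq>b \<and> E v a \<and> E v b)"
  proof
    fix v assume v: "v \<in> V - T"
    have s1: "sum x (N v \<inter> T) \<ge> 1" using ge1[of v] nT[of v] v AI sumT by simp
    show "(\<exists>u\<in>T. E v u \<and> (\<forall>w\<in>T. \<not> E u w)) \<or> (\<exists>a b. a\<in>T \<and> b\<in>T \<and> a\<noteq>b \<and> E v a \<and> E v b)"
    proof (cases "\<exists>a b. a\<in>T \<and> b\<in>T \<and> a\<noteq>b \<and> E v a \<and> E v b")
      case True thus ?thesis by blast
    next
      case False
      have "N v \<inter> T \<noteq> {}" using s1 by auto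
      then obtain u where u: "u \<in> N v \<inter> T" by blast
      have "N v \<inter> T = {u}" using u False by (auto simp: N_def)
      hence xu: "x u \<ge> 1" using s1 by simp
      have "\<forall>w\<in>T. \<not> E u w"
      proof (intro ballI notI)
        fix w assume "w \<in> T" "E u w"
        hence "x w \<le> sum x (N u)" using ge_one[of w u] EV by (auto simp: N_def)
        moreover have "x w > 0" using Tpos \<open>w \<in> T\<close> by simp
        moreover have "x u + sum x (N u) = 1" using eq1 u AI by simp
        ultimately show False using xu by simp
      qed
      thus ?thesis using u by (auto simp: N_def)
    qed
  qed
  obtain S where S: "S \<subseteq> T" "\<forall>u\<in>S. \<forall>w\<in>S. \<not> E u w" "\<forall>v\<in>V. v\<in>S \<or> (\<exists>u\<in>S. E v u)"
    using indep_dom[OF F finV subset_refl TV A B] by blast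
  have "maximal_independent_set V E S"
    unfolding maximal_independent_set_def independent_set_def
  proof (intro conjI allI impI)
    show "S \<subseteq> V" using S TV by blast
    show "\<forall>u\<in>S. \<forall>v\<in>S. \<not> E u v" using S by blast
    fix R assume R: "(R \<subseteq> V \<and> (\<forall>u\<in>R. \<forall>v\<in>R. \<not> E u v)) \<and> S \<subseteq> R"
    show "R = S"
    proof
      show "R \<subseteq> S"
      proof
        fix r assume "r \<in> R"
        hence "r \<in> V" using R by blast
        thus "r \<in> S" using S(3) R \<open>r \<in> R\<close> by blast
      qed
    qed (use R in blast)
  qed
  thus ?thesis using S T_def by blast
qed

end
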